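(* (i) No strongly hyperhyperimmune set has upper density $1$. (ii) For every real $\epsilon>0$ there is a strongly hyperhyperimmune set with upper density at least $1-\epsilon$.
   Context: For $S\subseteq\omega$ and $n>0$, $\rho_n(S)=|S\cap[0,n)|/n$ and the upper density is $\limsup_n\rho_n(S)$. $W_e$ denotes the $e$th c.e. set. An infinite set $A\subseteq\omega$ is strongly hyperhyperimmune if there is no computable function $f$ such that the sets $W_{f(0)},W_{f(1)},\dots$ are pairwise disjoint and all intersect $A$. *)

theory Defs
  imports Complex_Main "HOL-Library.Nat_Bijection" "HOL-Library.Liminf_Limsup" "HOL-Library.Extended_Real"
begin

text \<open>Codes for partial recursive functions (arity-free presentation: a function
applied to an argument list simply uses the arguments it needs).\<close>

datatype recf =
    Zero
  | Succ
  | Proj nat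
  | Comp recf "recf list"
  | Prim recf recf
  | Mu recf

inductive eval :: "recf \<Rightarrow> nat list \<Rightarrow> nat \<Rightarrow> bool" where
  eval_Zero: "eval Zero xs 0"
| eval_Succ: "eval Succ (x # xs) (Suc x)"
| eval_Proj: "i < length xs \<Longrightarrow> eval (Proj i) xs (xs ! i)"
| eval_Comp: "list_all2 (\<lambda>g y. eval g xs y) gs ys \<Longrightarrow> eval f ys z \<Longrightarrow> eval (Comp f gs) xs z"
| eval_Prim0: "eval f xs y \<Longrightarrow> eval (Prim f g) (0 # xs) y"
| eval_PrimS: "eval (Prim f g) (n # xs) y \<Longrightarrow> eval g (n # y # xs) z \<Longrightarrow>
      eval (Prim f g) (Suc n # xs) z"
| eval_Mu: "eval f (n # xs) 0 \<Longrightarrow> (\<forall>m<n. \<exists>y. eval f (m # xs) y \<and> 0 < y) \<Longrightarrow>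
      eval (Mu f) xs n"

fun enc :: "recf \<Rightarrow> nat" where
  "enc Zero = prod_encode (0, 0)"
| "enc Succ = prod_encode (1, 0)"
| "enc (Proj i) = prod_encode (2, i)"
| "enc (Comp f gs) = prod_encode (3, prod_encode (enc f, list_encode (map enc gs)))"
| "enc (Prim f g) = prod_encode (4, prod_encode (enc f, enc g))"
| "enc (Mu f) = prod_encode (5, enc f)"

text \<open>The e-th c.e. set: the domain of the e-th partial recursive function
(empty if e is not the number of a code).\<close>

definition W :: "nat \<Rightarrow> nat set" where
  "W e = {x. \<exists>c y. enc c = e \<and> eval c [x] y}"

definition computable :: "(nat \<Rightarrow> nat) \<Rightarrow> bool" where
  "computable f \<longleftrightarrow> (\<exists>c. \<forall>n. eval c [n] (f n))"

definition strongly_hyperhyperimmune :: "nat set \<Rightarrow> bool" where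
  "strongly_hyperhyperimmune A \<longleftrightarrow> infinite A \<and>
     \<not> (\<exists>f. computable f \<and> (\<forall>i j. i \<noteq> j \<longrightarrow> W (f i) \<inter> W (f j) = {})
            \<and> (\<forall>i. W (f i) \<inter> A \<noteq> {}))"

text \<open>rho n S for n > 0 (indexed by Suc n to avoid n = 0).\<close>

definition rho :: "nat \<Rightarrow> nat set \<Rightarrow> real" where
  "rho n S = real (card (S \<inter> {0..<n})) / real n"

definition upper_density :: "nat set \<Rightarrow> ereal" where
  "upper_density S = limsup (\<lambda>n. ereal (rho (Suc n) S))"

end

theory Submission
  imports Defs
begin

inductive_cases evalE_Comp: "eval (Comp f gs) xs z"
inductive_cases evalE_Mu: "eval (Mu f) xs z"

lemma list_all2_det:
  "list_all2 P gs ys \<Longrightarrow> list_all2 Q gs ys' \<Longrightarrow> (\<And>g y y'. P g y \<Longrightarrow> Q g y' \<Longrightarrow> y' = y) \<Longrightarrow> ys' = ys"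
proof (induction gs arbitrary: ys ys')
  case Nil thus ?case by simp
next
  case (Cons g gs)
  then obtain y ys0 y' ys0' where "ys = y # ys0" "ys' = y' # ys0'" "P g y" "Q g y'"
    "list_all2 P gs ys0" "list_all2 Q gs ys0'"
    by (auto simp: list_all2_Cons1)
  thus ?case using Cons by metis
qed

lemma eval_det: "eval c xs y \<Longrightarrow> eval c xs y' \<Longrightarrow> y' = y"
proof (induction arbitrary: y' rule: eval.induct)
  case (eval_Zero xs) from this(1) show ?case by (cases rule: eval.cases) auto
next
  case (eval_Succ x xs) from this(1) show ?case by (cases rule: eval.cases) auto
next
  case (eval_Proj i xs) from this(2) show ?case by (cases rule: eval.cases) auto
next
  case (eval_Comp xs gs ys f z)
  from eval_Comp.prems obtain ys' where a: "list_all2 (\<lambda>g y. eval g xs y) gs ys'" and b: "eval f ys' y'"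
    by (auto elim: evalE_Comp)
  have "ys' = ys" by (rule list_all2_det[OF eval_Comp.IH(1) a]) auto
  with b eval_Comp.IH(2) show ?case by simp
next
  case (eval_Prim0 f xs y)
  from eval_Prim0.prems show ?case by (cases rule: eval.cases) (auto simp: eval_Prim0.IH)
next
  case (eval_PrimS f g n xs y z)
  from eval_PrimS.prems show ?case
    by (cases rule: eval.cases) (auto dest: eval_PrimS.IH)
next
  case (eval_Mu f n xs)
  from eval_Mu.prems obtain n' where a: "y' = n'" "eval f (n' # xs) 0" and
    b: "\<forall>m<n'. \<exists>y. eval f (m # xs) y \<and> 0 < y" by (auto elim: evalE_Mu)
  show ?case
  proof (rule ccontr)
    assume "y' \<noteq> n"
    then consider "n' < n" | "n < n'" using a by linarith
    thus False
    proof cases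
      case 1 with eval_Mu.IH(2) obtain y where "eval f (n' # xs) y" "\<forall>y'. eval f (n' # xs) y' \<longrightarrow> y' = y" "0 < y"
        by blast
      with a show False by force
    next
      case 2 with b obtain y where "eval f (n # xs) y" "0 < y" by blast
      with eval_Mu.IH(1) show False by force
    qed
  qed
qed

lemma enc_inj: "enc c = enc d \<Longrightarrow> c = d"
proof (induction c arbitrary: d)
  case Zero thus ?case by (cases d) (auto simp: prod_encode_eq)
next
  case Succ thus ?case by (cases d) (auto simp: prod_encode_eq)
next
  case (Proj i) thus ?case by (cases d) (auto simp: prod_encode_eq)
next
  case (Comp f gs)
  show ?case
  proof (cases d)
    case (Comp f' gs')
    with Comp.prems have 1: "enc f = enc f'" and 2: "map enc gs = map enc gs'"
      by (auto simp: prod_encode_eq list_encode_eq)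
    from 1 Comp.IH(1) have "f = f'" by blast
    moreover have "gs = gs'" using 2 Comp.IH(2)
    proof (induction gs arbitrary: gs')
      case Nil thus ?case by simp
    next
      case (Cons g gs) thus ?case by (cases gs') auto
    qed
    ultimately show ?thesis using Comp by simp
  qed (use Comp.prems in \<open>auto simp: prod_encode_eq\<close>)
next
  case (Prim f g) thus ?case by (cases d) (auto simp: prod_encode_eq)
next
  case (Mu f) thus ?case by (cases d) (auto simp: prod_encode_eq)
qed

primrec C :: "nat \<Rightarrow> recf" where
  "C 0 = Zero" | "C (Suc n) = Comp Succ [C n]"

lemma eval_Comp1: "eval g xs a \<Longrightarrow> eval f [a] z \<Longrightarrow> eval (Comp f [g]) xs z"
  by (rule eval_Comp[of _ _ "[a]"]) auto
lemma eval_Comp2: "eval g xs a \<Longrightarrow> eval h xs b \<Longrightarrow> eval f [a,b] z \<Longrightarrow> eval (Comp f [g,h]) xs z"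
  by (rule eval_Comp[of _ _ "[a,b]"]) auto

lemma eval_Succ1: "eval Succ [a] (Suc a)" by (rule eval_Succ)
lemma eval_P0: "eval (Proj 0) (a # xs) a" using eval_Proj[of 0 "a#xs"] by simp
lemma eval_P1: "eval (Proj (Suc 0)) (a # b # xs) b" using eval_Proj[of 1 "a#b#xs"] by simp
lemma eval_P2: "eval (Proj 2) (a # b # c # xs) c" using eval_Proj[of 2 "a#b#c#xs"] by simp

lemma eval_C: "eval (C n) xs n"
  by (induction n) (auto intro: eval_Zero eval_Comp1 eval_Succ1)

definition "ADD = Prim (Proj 0) (Comp Succ [Proj 1])"
lemma eval_ADD: "eval ADD (a # b # xs) (a + b)"
  unfolding ADD_def
proof (induction a)
  case 0 show ?case using eval_Prim0[OF eval_P0[of b xs]] by simp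
next
  case (Suc a) show ?case
    by (rule eval_PrimS[OF Suc]) (auto intro: eval_Comp1 eval_P1 eval_Succ1)
qed

lemma eval_ADD': "z = a + b \<Longrightarrow> eval ADD [a, b] z" using eval_ADD[of a b "[]"] by simp

definition "MUL = Prim Zero (Comp ADD [Proj 1, Proj 2])"
lemma eval_MUL: "eval MUL (a # b # xs) (a * b)"
  unfolding MUL_def
proof (induction a)
  case 0 show ?case using eval_Prim0[OF eval_Zero[of "b#xs"]] by simp
next
  case (Suc a) show ?case
    by (rule eval_PrimS[OF Suc]) (auto intro!: eval_Comp2 eval_P1 eval_P2 intro!: eval_ADD')
qed

definition "PRED = Prim Zero (Proj 0)"
lemma eval_PRED: "eval PRED (a # xs) (a - 1)"
  unfolding PRED_def
proof (induction a)
  case 0 thus ?case using eval_Prim0[OF eval_Zero[of xs]] by simp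
next
  case (Suc n)
  show ?case by (rule eval_PrimS[OF Suc]) (auto intro: eval_P0)
qed

lemma eval_MUL': "z = a * b \<Longrightarrow> eval MUL [a, b] z" using eval_MUL[of a b "[]"] by simp
lemma eval_PRED': "z = a - 1 \<Longrightarrow> eval PRED [a] z" using eval_PRED[of a "[]"] by simp

definition "SUB = Prim (Proj 0) (Comp PRED [Proj 1])"
lemma eval_SUB: "eval SUB (a # b # xs) (b - a)"
  unfolding SUB_def
proof (induction a)
  case 0 show ?case using eval_Prim0[OF eval_P0[of b xs]] by simp
next
  case (Suc a) show ?case
    by (rule eval_PrimS[OF Suc]) (auto intro!: eval_Comp1 eval_P1 intro!: eval_PRED')
qed

definition "TRI = Prim Zero (Comp ADD [Proj 1, Comp Succ [Proj 0]])"
lemma eval_TRI: "eval TRI (a # xs) (triangle a)"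
  unfolding TRI_def
proof (induction a)
  case 0 show ?case using eval_Prim0[OF eval_Zero[of "xs"]] by simp
next
  case (Suc a) show ?case
    by (rule eval_PrimS[OF Suc]) (auto intro!: eval_Comp2 eval_Comp1 eval_P1 eval_P0 eval_Succ1 intro!: eval_ADD')
qed

definition "PAIR = Comp ADD [Comp TRI [Comp ADD [Proj 0, Proj 1]], Proj 0]"
lemma eval_PAIR: "eval PAIR (a # b # xs) (prod_encode (a, b))"
  unfolding PAIR_def prod_encode_def
  by (auto intro!: eval_Comp2 eval_Comp1 eval_P1 eval_P0 eval_TRI eval_ADD')

definition "POW2 = Prim (C 1) (Comp MUL [C 2, Proj 1])"
lemma eval_POW2: "eval POW2 (a # xs) (2 ^ a)"
  unfolding POW2_def
proof (induction a)
  case 0 show ?case using eval_Prim0[OF eval_C[of 1 "xs"]] by simp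
next
  case (Suc a) show ?case
    by (rule eval_PrimS[OF Suc]) (auto intro!: eval_Comp2 eval_P1 eval_C intro!: eval_MUL')
qed

definition "DIST = Comp ADD [Comp SUB [Proj 1, Proj 0], Comp SUB [Proj 0, Proj 1]]"
lemma eval_DIST: "eval DIST (a # b # xs) ((a - b) + (b - a))"
  unfolding DIST_def
  by (auto intro!: eval_Comp2 eval_P1 eval_P0 eval_SUB[of _ _ "[]", simplified] eval_ADD')

lemma eval_DIST': "z = (a - b) + (b - a) \<Longrightarrow> eval DIST [a, b] z" using eval_DIST[of a b "[]"] by simp
lemma eval_POW2': "z = 2 ^ a \<Longrightarrow> eval POW2 [a] z" using eval_POW2[of a "[]"] by simp
lemma eval_PAIR': "z = prod_encode (a, b) \<Longrightarrow> eval PAIR [a, b] z" using eval_PAIR[of a b "[]"] by simp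
lemma eval_Succ': "z = Suc a \<Longrightarrow> eval Succ [a] z" using eval_Succ[of a "[]"] by simp

definition "FF = Comp DIST [Comp Succ [Proj 1], Comp MUL [Comp POW2 [Proj 2], Comp Succ [Comp ADD [Proj 0, Proj 0]]]]"

definition dv :: "nat \<Rightarrow> nat \<Rightarrow> nat \<Rightarrow> nat" where
  "dv k x i = (Suc x - 2 ^ i * Suc (k + k)) + (2 ^ i * Suc (k + k) - Suc x)"

lemma eval_FF: "eval FF (k # x # i # xs) (dv k x i)"
  unfolding FF_def dv_def
  by (auto intro!: eval_Comp2 eval_Comp1 eval_P0 eval_P1 eval_P2 eval_DIST' eval_MUL' eval_POW2' eval_ADD' eval_Succ')

lemma dv_zero: "dv k x i = 0 \<longleftrightarrow> Suc x = 2 ^ i * Suc (k + k)"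
  unfolding dv_def by auto

definition "DC = Mu FF"
definition Dset :: "nat \<Rightarrow> nat set" where "Dset i = {x. \<exists>k. Suc x = 2 ^ i * Suc (k + k)}"

lemma DC_halt: assumes "x \<in> Dset i" shows "\<exists>y. eval DC [x, i] y"
proof -
  let ?P = "\<lambda>k. Suc x = 2 ^ i * Suc (k + k)"
  from assms obtain k where k: "?P k" by (auto simp: Dset_def)
  let ?n = "LEAST k. ?P k"
  have "?P ?n" using k by (rule LeastI)
  hence "dv ?n x i = 0" using dv_zero by blast
  hence "eval FF (?n # [x, i]) 0" using eval_FF[of ?n x i "[]"] by simp
  moreover have "\<forall>m<?n. \<exists>y. eval FF (m # [x, i]) y \<and> 0 < y"
  proof (intro allI impI)
    fix m assume "m < ?n"
    hence "\<not> ?P m" by (rule not_less_Least)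
    thus "\<exists>y. eval FF (m # [x, i]) y \<and> 0 < y" using eval_FF[of m x i "[]"] dv_zero
      by (intro exI[of _ "dv m x i"]) auto
  qed
  ultimately show ?thesis unfolding DC_def by (blast intro: eval_Mu)
qed

lemma DC_halt_rev: assumes "eval DC [x, i] y" shows "x \<in> Dset i"
proof -
  from assms have "eval FF (y # [x, i]) 0" unfolding DC_def by (auto elim: evalE_Mu)
  with eval_FF[of y x i "[]"] have "dv y x i = 0" by (metis eval_det)
  thus ?thesis unfolding Dset_def dv_zero by blast
qed

definition ci :: "nat \<Rightarrow> recf" where "ci i = Comp DC [Proj 0, C i]"

lemma W_ci: "W (enc (ci i)) = Dset i"
proof (rule set_eqI, rule iffI)
  fix x assume "x \<in> W (enc (ci i))"
  then obtain y where "eval (ci i) [x] y" unfolding W_def using enc_inj by blast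
  then obtain ys where a: "list_all2 (\<lambda>g y. eval g [x] y) [Proj 0, C i] ys" and b: "eval DC ys y"
    unfolding ci_def by (auto elim: evalE_Comp)
  from a obtain u v where "ys = [u, v]" "eval (Proj 0) [x] u" "eval (C i) [x] v"
    by (auto simp: list_all2_Cons1)
  moreover have "u = x" using calculation(2) eval_P0[of x "[]"] eval_det by blast
  moreover have "v = i" using calculation(3) eval_C eval_det by blast
  ultimately show "x \<in> Dset i" using b DC_halt_rev by blast
next
  fix x assume "x \<in> Dset i"
  then obtain y where "eval DC [x, i] y" using DC_halt by blast
  hence "eval (ci i) [x] y" unfolding ci_def by (auto intro!: eval_Comp2 eval_P0 eval_C)
  thus "x \<in> W (enc (ci i))" unfolding W_def by blast
qed

definition "KREC = Prim (C (enc Zero)) (Comp PAIR [C 3, Comp PAIR [C (enc Succ), Comp Succ [Comp PAIR [Proj 1, Zero]]]])"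

lemma eval_KREC: "eval KREC (n # xs) (enc (C n))"
  unfolding KREC_def
proof (induction n)
  case 0 show ?case using eval_Prim0[OF eval_C[of "enc Zero" xs]] by simp
next
  case (Suc n) show ?case
    by (rule eval_PrimS[OF Suc]) (auto intro!: eval_Comp2 eval_Comp1 eval_C eval_P1 eval_Zero eval_PAIR' eval_Succ')
qed

definition "FCODE = Comp PAIR [C 3, Comp PAIR [C (enc DC), Comp Succ [Comp PAIR [C (enc (Proj 0)), Comp Succ [Comp PAIR [KREC, Zero]]]]]]"

lemma eval_FCODE: "eval FCODE [n] (enc (ci n))"
  unfolding FCODE_def ci_def
  by (auto intro!: eval_Comp2 eval_Comp1 eval_C eval_Zero eval_PAIR' eval_Succ' eval_KREC)

lemma computable_ci: "computable (\<lambda>i. enc (ci i))"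
  unfolding computable_def using eval_FCODE by blast

lemma Dset_disj: assumes "i \<noteq> j" shows "Dset i \<inter> Dset j = {}"
proof -
  have *: False if "i < j" "(2::nat) ^ i * Suc (a + a) = 2 ^ j * Suc (b + b)" for i j a b
  proof -
    have "(2::nat) ^ j = 2 ^ i * (2 * 2 ^ (j - i - 1))"
    proof -
      have "j = i + Suc (j - i - 1)" using that(1) by simp
      hence "(2::nat) ^ j = 2 ^ i * 2 ^ Suc (j - i - 1)" by (metis power_add)
      thus ?thesis by simp
    qed
    with that(2) have "2 ^ i * Suc (a + a) = 2 ^ i * (2 * 2 ^ (j - i - 1) * Suc (b + b))" by (metis mult.assoc)
    hence "Suc (a + a) = 2 * 2 ^ (j - i - 1) * Suc (b + b)" by (metis mult_cancel_left power_not_zero zero_neq_numeral)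
    hence "even (Suc (a + a))" by simp
    thus False by simp
  qed
  show ?thesis
  proof (rule ccontr)
    assume "Dset i \<inter> Dset j \<noteq> {}"
    then obtain a b x where "Suc x = 2 ^ i * Suc (a + a)" "Suc x = 2 ^ j * Suc (b + b)"
      unfolding Dset_def by auto
    thus False using *[of i j a b] *[of j i b a] assms by (cases "i < j") auto
  qed
qed

lemma Dset_card: "m div 2 ^ Suc i \<le> card (Dset i \<inter> {..<m})"
proof -
  let ?g = "\<lambda>k. 2 ^ i * Suc (k + k) - 1"
  have inj: "inj_on ?g {..<m div 2 ^ Suc i}"
  proof (rule inj_onI)
    fix a b assume "?g a = ?g b"
    moreover have "(2::nat) ^ i * Suc (a + a) > 0" "(2::nat) ^ i * Suc (b + b) > 0" by auto
    ultimately have "(2::nat) ^ i * Suc (a + a) = 2 ^ i * Suc (b + b)" by linarith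
    thus "a = b" by simp
  qed
  have sub: "?g ` {..<m div 2 ^ Suc i} \<subseteq> Dset i \<inter> {..<m}"
  proof
    fix x assume "x \<in> ?g ` {..<m div 2 ^ Suc i}"
    then obtain k where k: "k < m div 2 ^ Suc i" "x = ?g k" by auto
    have pos: "(2::nat) ^ i * Suc (k + k) > 0" by auto
    hence "Suc x = 2 ^ i * Suc (k + k)" using k by simp
    moreover have le1: "(2::nat) ^ i * Suc (k + k) \<le> 2 ^ Suc i * (m div 2 ^ Suc i)"
    proof -
      have "(2::nat) ^ i * Suc (k + k) \<le> 2 ^ i * (2 * Suc k)" by (intro mult_le_mono2) simp
      also have "\<dots> = 2 ^ Suc i * Suc k" by simp
      also have "\<dots> \<le> 2 ^ Suc i * (m div 2 ^ Suc i)" using k(1) by (intro mult_le_mono2) simp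
      finally show ?thesis .
    qed
    moreover have le2: "2 ^ Suc i * (m div 2 ^ Suc i) \<le> m" by (metis times_div_less_eq_dividend)
    have "x < m" using le1 le2 \<open>Suc x = 2 ^ i * Suc (k + k)\<close> by linarith
    ultimately show "x \<in> Dset i \<inter> {..<m}" unfolding Dset_def by auto
  qed
  have "m div 2 ^ Suc i = card (?g ` {..<m div 2 ^ Suc i})" using card_image[OF inj] by simp
  also have "\<dots> \<le> card (Dset i \<inter> {..<m})" by (rule card_mono[OF _ sub]) auto
  finally show ?thesis .
qed

lemma miss_density:
  assumes "Dset i \<inter> A = {}"
  shows "upper_density A < 1"
proof -
  define P :: nat where "P = 2 ^ Suc i"
  have P0: "P > 0" unfolding P_def by simp
  have bound: "rho m A \<le> 1 - 1 / P + 1 / m" if "m > 0" for m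
  proof -
    have "A \<inter> {0..<m} \<subseteq> {..<m} - (Dset i \<inter> {..<m})" using assms by auto
    hence "card (A \<inter> {0..<m}) \<le> card ({..<m} - (Dset i \<inter> {..<m}))" by (intro card_mono) auto
    also have "\<dots> = m - card (Dset i \<inter> {..<m})" by (subst card_Diff_subset) auto
    also have "\<dots> \<le> m - m div P" using Dset_card[of m i] unfolding P_def by linarith
    finally have c: "real (card (A \<inter> {0..<m})) \<le> real m - real (m div P)"
      by (metis div_le_dividend of_nat_diff of_nat_mono)
    have "real m = real P * real (m div P) + real (m mod P)"
      by (metis of_nat_add of_nat_mult div_mult_mod_eq mult.commute)
    moreover have "real (m mod P) < real P" using P0 by simp
    ultimately have "real m / real P < real (m div P) + 1" using P0
      by (simp add: field_simps)
    hence "real (card (A \<inter> {0..<m})) \<le> real m - real m / real P + 1" using c by linarith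
    hence "real (card (A \<inter> {0..<m})) / real m \<le> (real m - real m / real P + 1) / real m"
      using that by (intro divide_right_mono) auto
    also have "\<dots> = 1 - 1 / P + 1 / m" using that by (simp add: field_simps)
    finally show ?thesis unfolding rho_def .
  qed
  have ev: "eventually (\<lambda>n. ereal (rho (Suc n) A) \<le> ereal (1 - 1 / (2 * real P))) sequentially"
  proof (rule eventually_sequentiallyI[of "2 * P"])
    fix n assume n: "2 * P \<le> n"
    have "1 / real (Suc n) \<le> 1 / (2 * real P)" using n P0
      by (intro divide_left_mono) auto
    hence "rho (Suc n) A \<le> 1 - 1 / P + 1 / (2 * P)" using bound[of "Suc n"] by simp
    also have "\<dots> = 1 - 1 / (2 * P)" using P0 by (simp add: field_simps)
    finally show "ereal (rho (Suc n) A) \<le> ereal (1 - 1 / (2 * real P))" by simp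
  qed
  have "upper_density A \<le> ereal (1 - 1 / (2 * real P))"
    unfolding upper_density_def by (rule Limsup_bounded[OF ev])
  also have "\<dots> < 1" using P0 by simp
  finally show ?thesis .
qed

lemma part1: "strongly_hyperhyperimmune A \<Longrightarrow> upper_density A \<noteq> 1"
proof
  assume s: "strongly_hyperhyperimmune A" and u: "upper_density A = 1"
  have "\<forall>i. W (enc (ci i)) \<inter> A \<noteq> {}"
    using miss_density u by (metis W_ci inf_commute less_irrefl)
  moreover have "\<forall>i j. i \<noteq> j \<longrightarrow> W (enc (ci i)) \<inter> W (enc (ci j)) = {}"
    by (auto simp: W_ci Dset_disj)
  ultimately show False using s computable_ci unfolding strongly_hyperhyperimmune_def by blast
qed

definition Often :: "nat set \<Rightarrow> real \<Rightarrow> bool" where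
  "Often U c \<longleftrightarrow> (\<forall>N. \<exists>m>N. real (card (U \<inter> {..<m})) \<le> c * m)"

lemma card_lessThan_le: "card (U \<inter> {..<m}) \<le> m"
  by (rule order.trans[OF card_mono[of "{..<m}"]]) auto

lemma step_exists:
  fixes Y :: "nat \<Rightarrow> nat set"
  assumes disj: "\<And>i j. i \<noteq> j \<Longrightarrow> Y i \<inter> Y j = {}" and d: "0 < d" and inf: "Often U (e - d)"
  shows "\<exists>i. Y i \<inter> {..<n} = {} \<and> Often (U \<union> Y i) (e - d / 2)"
proof -
  define Bad where "Bad = {i. Y i \<inter> {..<n} \<noteq> {}}"
  define h where "h i = (SOME x. x \<in> Y i \<inter> {..<n})" for i
  have hB: "h i \<in> Y i \<inter> {..<n}" if "i \<in> Bad" for i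
    proof -
    from that obtain x where "x \<in> Y i \<inter> {..<n}" unfolding Bad_def by blast
    thus ?thesis unfolding h_def by (rule someI)
  qed
  have "inj_on h Bad"
  proof (rule inj_onI)
    fix i j assume "i \<in> Bad" "j \<in> Bad" "h i = h j"
    show "i = j"
    proof (rule ccontr)
      assume "i \<noteq> j"
      hence "Y i \<inter> Y j = {}" by (rule disj)
      moreover have "h i \<in> Y i" using hB \<open>i \<in> Bad\<close> by blast
      moreover have "h j \<in> Y j" using hB \<open>j \<in> Bad\<close> by blast
      ultimately show False using \<open>h i = h j\<close> by auto
    qed
  qed
  moreover have "h ` Bad \<subseteq> {..<n}" using hB by blast
  ultimately have "finite Bad" using inj_on_finite by blast
  hence infG: "infinite (- Bad)" using Diff_infinite_finite[OF _ infinite_UNIV_nat] by (simp add: Compl_eq_Diff_UNIV)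
  define M :: nat where "M = nat \<lceil>2 / d\<rceil> + 1"
  have M0: "M > 0" unfolding M_def by simp
  have "2 / d \<le> real M" unfolding M_def by linarith
  hence Md: "1 / real M \<le> d / 2" using d M0 by (simp add: field_simps)
  obtain J where J: "J \<subseteq> - Bad" "finite J" "card J = M"
    using infinite_arbitrarily_large[OF infG] by blast
  have Jne: "J \<noteq> {}" using J M0 by auto
  have small: "\<exists>i\<in>J. real (card (Y i \<inter> {..<m})) \<le> m / M" for m
  proof (rule ccontr)
    assume "\<not> ?thesis"
    hence lt: "\<forall>i\<in>J. m / M < real (card (Y i \<inter> {..<m}))" by auto
    have "(\<Sum>i\<in>J. m / M) < (\<Sum>i\<in>J. real (card (Y i \<inter> {..<m})))"
      using lt J(2) Jne by (intro sum_strict_mono) auto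
    also have "\<dots> = real (\<Sum>i\<in>J. card (Y i \<inter> {..<m}))" by simp
    also have "(\<Sum>i\<in>J. card (Y i \<inter> {..<m})) = card (\<Union>i\<in>J. Y i \<inter> {..<m})"
      using J(2) disj by (subst card_UN_disjoint) auto
    also have "\<dots> \<le> m" by (rule order.trans[OF card_mono[of "{..<m}"]]) auto
    finally show False using J M0 by simp
  qed
  define S where "S = {m. real (card (U \<inter> {..<m})) \<le> (e - d) * m}"
  have infS: "infinite S" unfolding infinite_nat_iff_unbounded S_def using inf Often_def by auto
  define \<phi> where "\<phi> m = (SOME i. i \<in> J \<and> real (card (Y i \<inter> {..<m})) \<le> m / M)" for m
  have \<phi>: "\<phi> m \<in> J \<and> real (card (Y (\<phi> m) \<inter> {..<m})) \<le> m / M" for m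
    unfolding \<phi>_def by (rule someI_ex) (use small[of m] in auto)
  have "finite (\<phi> ` S)" by (rule finite_subset[OF _ J(2)]) (use \<phi> in auto)
  then obtain i where i: "i \<in> \<phi> ` S" "infinite (\<phi> -` {i} \<inter> S)"
    using inf_img_fin_domE'[OF _ infS] by blast
  have iJ: "i \<in> J" using i(1) \<phi> by auto
  have "Often (U \<union> Y i) (e - d / 2)"
    unfolding Often_def
  proof
    fix N
    obtain m where m: "m > N" "m \<in> \<phi> -` {i} \<inter> S"
      using i(2) unfolding infinite_nat_iff_unbounded by blast
    have "card ((U \<union> Y i) \<inter> {..<m}) \<le> card (U \<inter> {..<m}) + card (Y i \<inter> {..<m})"
      by (metis Int_Un_distrib2 card_Un_le)
    hence "real (card ((U \<union> Y i) \<inter> {..<m})) \<le> (e - d) * m + m / M"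
      using m \<phi>[of m] unfolding S_def by auto
    also have "m / M = m * (1 / M)" by simp
    also have "\<dots> \<le> m * (d / 2)" using Md by (intro mult_left_mono) auto
    finally have "real (card ((U \<union> Y i) \<inter> {..<m})) \<le> (e - d / 2) * m" by (simp add: algebra_simps)
    thus "\<exists>m>N. real (card ((U \<union> Y i) \<inter> {..<m})) \<le> (e - d / 2) * real m" using m by blast
  qed
  moreover have "Y i \<inter> {..<n} = {}" using iJ J(1) unfolding Bad_def by auto
  ultimately show ?thesis by blast
qed

definition Qp :: "(nat \<Rightarrow> nat set) \<Rightarrow> real \<Rightarrow> nat set \<Rightarrow> nat \<Rightarrow> real \<Rightarrow> nat \<times> nat \<Rightarrow> bool" where
  "Qp Y e U n d im \<longleftrightarrow> Y (fst im) \<inter> {..<n} = {} \<and> n < snd im \<and>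
     real (card ((U \<union> Y (fst im)) \<inter> {..<snd im})) \<le> (e - d / 2) * snd im \<and> Often (U \<union> Y (fst im)) (e - d / 2)"

lemma Qp_exists:
  fixes Y :: "nat \<Rightarrow> nat set"
  assumes disj: "\<And>i j. i \<noteq> j \<Longrightarrow> Y i \<inter> Y j = {}" and d: "0 < d" and inf: "Often U (e - d)"
  shows "\<exists>im. Qp Y e U n d im"
proof -
  have "\<exists>i. Y i \<inter> {..<n} = {} \<and> Often (U \<union> Y i) (e - d / 2)"
    by (rule step_exists[where n=n, OF _ d inf]) (erule disj)
  then obtain i where i: "Y i \<inter> {..<n} = {}" "Often (U \<union> Y i) (e - d / 2)"
    by (elim exE conjE)
  then obtain m where "m > n" "real (card ((U \<union> Y i) \<inter> {..<m})) \<le> (e - d / 2) * m"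
    unfolding Often_def by blast
  thus ?thesis using i unfolding Qp_def by (intro exI[of _ "(i, m)"]) auto
qed

primrec st :: "(nat \<Rightarrow> nat \<Rightarrow> nat set) \<Rightarrow> real \<Rightarrow> nat \<Rightarrow> nat set \<times> nat \<times> real" where
  "st X e 0 = ({}, 0, e / 2)"
| "st X e (Suc s) = (let p = st X e s; im = (SOME im. Qp (X s) e (fst p) (fst (snd p)) (snd (snd p)) im)
     in (fst p \<union> X s (fst im), snd im, snd (snd p) / 2))"

lemma construct:
  fixes X :: "nat \<Rightarrow> nat \<Rightarrow> nat set" and e :: real
  assumes disj: "\<And>s i j. i \<noteq> j \<Longrightarrow> X s i \<inter> X s j = {}" and e: "0 < e"
  shows "\<exists>B. (\<forall>s. \<exists>i. X s i \<subseteq> B) \<and> (\<exists>r::nat\<Rightarrow>nat. strict_mono r \<and> (\<forall>s. 0 < r s \<and> real (card (B \<inter> {..<r s})) \<le> e * r s))"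
proof -
  define U where "U s = fst (st X e s)" for s
  define n where "n s = fst (snd (st X e s))" for s
  define d where "d s = snd (snd (st X e s))" for s
  define im where "im s = (SOME im. Qp (X s) e (U s) (n s) (d s) im)" for s
  have stS: "U (Suc s) = U s \<union> X s (fst (im s))" "n (Suc s) = snd (im s)" "d (Suc s) = d s / 2" for s
    unfolding U_def n_def d_def im_def by (simp_all add: Let_def)
  have inv: "0 < d s \<and> Often (U s) (e - d s) \<and> Qp (X s) e (U s) (n s) (d s) (im s)" for s
  proof (induction s)
    case 0
    have o: "Often (U 0) (e - d 0)" unfolding Often_def U_def d_def using e
      by (auto intro!: exI[of _ "Suc N" for N])
    moreover have d0: "0 < d 0" unfolding d_def using e by simp
    moreover have "\<exists>im. Qp (X 0) e (U 0) (n 0) (d 0) im"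
      by (rule Qp_exists[OF _ d0 o]) (erule disj)
    hence "Qp (X 0) e (U 0) (n 0) (d 0) (im 0)" unfolding im_def by (rule someI_ex)
    ultimately show ?case by blast
  next
    case (Suc s)
    hence o: "Often (U (Suc s)) (e - d (Suc s))" and d0: "0 < d (Suc s)" unfolding Qp_def stS by auto
    have "\<exists>im. Qp (X (Suc s)) e (U (Suc s)) (n (Suc s)) (d (Suc s)) im"
      by (rule Qp_exists[OF _ d0 o]) (erule disj)
    hence "Qp (X (Suc s)) e (U (Suc s)) (n (Suc s)) (d (Suc s)) (im (Suc s))" unfolding im_def by (rule someI_ex)
    thus ?case using o d0 by blast
  qed
  have nS: "n s < n (Suc s)" for s using inv[of s] unfolding Qp_def stS by auto
  hence smn: "strict_mono n" by (simp add: strict_mono_Suc_iff)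
  have Umono: "U s \<subseteq> U t" if "s \<le> t" for s t
    using that by (induction rule: dec_induct) (auto simp: stS)
  have keep: "U (s + t) \<inter> {..<n s} = U s \<inter> {..<n s}" for s t
  proof (induction t)
    case 0 show ?case by simp
  next
    case (Suc t)
    have "X (s + t) (fst (im (s + t))) \<inter> {..<n (s + t)} = {}" using inv[of "s + t"] unfolding Qp_def by auto
    moreover have "n s \<le> n (s + t)" using smn by (simp add: strict_mono_less_eq)
    ultimately have "X (s + t) (fst (im (s + t))) \<inter> {..<n s} = {}" by auto
    thus ?case using Suc by (auto simp: stS)
  qed
  define B where "B = (\<Union>s. U s)"
  have Beq: "B \<inter> {..<n s} = U s \<inter> {..<n s}" for s
  proof
    show "B \<inter> {..<n s} \<subseteq> U s \<inter> {..<n s}"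
    proof
      fix x assume "x \<in> B \<inter> {..<n s}"
      then obtain t where t: "x \<in> U t" "x < n s" unfolding B_def by auto
      show "x \<in> U s \<inter> {..<n s}"
      proof (cases "t \<le> s")
        case True thus ?thesis using t Umono by auto
      next
        case False
        hence "t = s + (t - s)" by simp
        hence "x \<in> U (s + (t - s)) \<inter> {..<n s}" using t by simp
        thus ?thesis using keep by blast
      qed
    qed
  qed (auto simp: B_def)
  have "X s (fst (im s)) \<subseteq> B" for s
  proof -
    have "X s (fst (im s)) \<subseteq> U (Suc s)" by (simp add: stS)
    also have "U (Suc s) \<subseteq> B" unfolding B_def by (rule UN_upper) simp
    finally show ?thesis .
  qed
  hence "\<forall>s. \<exists>i. X s i \<subseteq> B" by blast
  moreover have "strict_mono (\<lambda>s. n (Suc s))" using smn by (simp add: strict_mono_def)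
  moreover have "0 < n (Suc s) \<and> real (card (B \<inter> {..<n (Suc s)})) \<le> e * n (Suc s)" for s
  proof -
    have q: "Qp (X s) e (U s) (n s) (d s) (im s)" using inv by blast
    hence "real (card (U (Suc s) \<inter> {..<n (Suc s)})) \<le> (e - d s / 2) * n (Suc s)"
      unfolding Qp_def stS by simp
    also have "\<dots> \<le> e * n (Suc s)" using inv[of s] by (intro mult_right_mono) auto
    finally show ?thesis using Beq[of "Suc s"] nS[of s] by simp
  qed
  ultimately have h1: "\<forall>s. \<exists>i. X s i \<subseteq> B" and h2: "strict_mono (\<lambda>s. n (Suc s))"
    and h3: "\<forall>s. 0 < n (Suc s) \<and> real (card (B \<inter> {..<n (Suc s)})) \<le> e * n (Suc s)" by blast+
  show ?thesis
  proof (rule exI[of _ B], rule conjI)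
    show "\<forall>s. \<exists>i. X s i \<subseteq> B" by (fact h1)
    show "\<exists>r::nat\<Rightarrow>nat. strict_mono r \<and> (\<forall>s. 0 < r s \<and> real (card (B \<inter> {..<r s})) \<le> e * r s)"
    proof -
      define r where "r s = n (Suc s)" for s
      have "strict_mono r \<and> (\<forall>s. 0 < r s \<and> real (card (B \<inter> {..<r s})) \<le> e * r s)"
        using h2 h3 unfolding r_def[abs_def] by simp
      thus ?thesis by (rule exI[where x=r])
    qed
  qed
qed

lemma density_from:
  fixes r :: "nat \<Rightarrow> nat" and B :: "nat set" and e :: real
  assumes r: "strict_mono r" "\<And>s. 0 < r s" "\<And>s. real (card (B \<inter> {..<r s})) \<le> e * r s"
  shows "ereal (1 - e) \<le> upper_density (- B)"
proof -
  let ?a = "\<lambda>k. ereal (rho (Suc k) (- B))"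
  have sm: "strict_mono (\<lambda>s. r s - 1)"
    unfolding strict_mono_def
  proof (intro allI impI)
    fix a b :: nat assume "a < b"
    with r(1) have "r a < r b" by (rule strict_monoD)
    thus "r a - 1 < r b - 1" using r(2)[of a] by linarith
  qed
  have tm: "ereal (1 - e) \<le> (?a \<circ> (\<lambda>s. r s - 1)) s" for s
  proof -
    have rs: "Suc (r s - 1) = r s" using r(2)[of s] by simp
    have "card (- B \<inter> {0..<r s}) = r s - card (B \<inter> {..<r s})"
    proof -
      have "- B \<inter> {0..<r s} = {..<r s} - (B \<inter> {..<r s})" by auto
      thus ?thesis by (simp add: card_Diff_subset)
    qed
    moreover have "card (B \<inter> {..<r s}) \<le> r s" by (rule card_lessThan_le)
    ultimately have "real (card (- B \<inter> {0..<r s})) = real (r s) - real (card (B \<inter> {..<r s}))"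
      by simp
    hence "real (card (- B \<inter> {0..<r s})) \<ge> (1 - e) * r s" using r(3)[of s] by (simp add: algebra_simps)
    hence "1 - e \<le> rho (r s) (- B)" unfolding rho_def using r(2)[of s] by (simp add: field_simps)
    thus ?thesis using rs by simp
  qed
  have "ereal (1 - e) \<le> limsup (?a \<circ> (\<lambda>s. r s - 1))"
    by (rule le_Limsup[OF trivial_limit_sequentially]) (use tm in auto)
  also have "\<dots> \<le> limsup ?a" by (rule limsup_subseq_mono[OF sm])
  finally show ?thesis unfolding upper_density_def .
qed

definition fc :: "recf \<Rightarrow> nat \<Rightarrow> nat" where "fc c n = (THE y. eval c [n] y)"

definition Xs :: "nat \<Rightarrow> nat \<Rightarrow> nat set" where
  "Xs s i = (let c = (THE c. enc c = s) in
     if (\<forall>n. eval c [n] (fc c n)) \<and> (\<forall>i j. i \<noteq> j \<longrightarrow> W (fc c i) \<inter> W (fc c j) = {})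
     then W (fc c i) else {})"

lemma Xs_disj: "i \<noteq> j \<Longrightarrow> Xs s i \<inter> Xs s j = {}"
  unfolding Xs_def Let_def by auto

lemma Xs_comp:
  assumes c: "\<forall>n. eval c [n] (f n)" and disj: "\<forall>i j. i \<noteq> j \<longrightarrow> W (f i) \<inter> W (f j) = {}"
  shows "Xs (enc c) i = W (f i)"
proof -
  have t: "(THE c'. enc c' = enc c) = c" by (rule the_equality) (auto dest: enc_inj)
  have fcf: "fc c = f"
  proof
    fix n show "fc c n = f n" unfolding fc_def
      by (rule the_equality) (use c eval_det in blast)+
  qed
  show ?thesis unfolding Xs_def Let_def t fcf using c disj by simp
qed

lemma finite_density: assumes "finite A" shows "upper_density A \<le> ereal (1/4)"
proof -
  have "eventually (\<lambda>n. ereal (rho (Suc n) A) \<le> ereal (1/4)) sequentially"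
  proof (rule eventually_sequentiallyI[of "4 * card A"])
    fix n assume n: "4 * card A \<le> n"
    have "card (A \<inter> {0..<Suc n}) \<le> card A" using assms by (intro card_mono) auto
    hence "real (card (A \<inter> {0..<Suc n})) * 4 \<le> real (Suc n)" using n by linarith
    hence "rho (Suc n) A \<le> 1/4" unfolding rho_def by (simp add: field_simps)
    thus "ereal (rho (Suc n) A) \<le> ereal (1/4)" by simp
  qed
  thus ?thesis unfolding upper_density_def by (rule Limsup_bounded)
qed

lemma part2:
  assumes eps: "(\<epsilon>::real) > 0"
  shows "\<exists>A. strongly_hyperhyperimmune A \<and> upper_density A \<ge> ereal (1 - \<epsilon>)"
proof -
  define e where "e = min \<epsilon> (1/2)"
  have e: "0 < e" "e \<le> \<epsilon>" "e \<le> 1/2" using eps unfolding e_def by auto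
  obtain B where B1: "\<forall>s. \<exists>i. Xs s i \<subseteq> B" and
    B2: "\<exists>r::nat\<Rightarrow>nat. strict_mono r \<and> (\<forall>s. 0 < r s \<and> real (card (B \<inter> {..<r s})) \<le> e * r s)"
    using construct[of Xs e, OF Xs_disj e(1)] by blast
  then obtain r :: "nat \<Rightarrow> nat" where r: "strict_mono r" "\<And>s. 0 < r s" "\<And>s. real (card (B \<inter> {..<r s})) \<le> e * r s"
    by blast
  have ud: "ereal (1 - e) \<le> upper_density (- B)" by (rule density_from[OF r])
  have "infinite (- B)"
  proof
    assume "finite (- B)"
    hence "upper_density (- B) \<le> ereal (1/4)" by (rule finite_density)
    with ud have "1 - e \<le> 1/4" by (metis ereal_less_eq(3) order.trans)
    with e show False by linarith
  qed
  moreover have "\<not> (\<exists>f. computable f \<and> (\<forall>i j. i \<noteq> j \<longrightarrow> W (f i) \<inter> W (f j) = {})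
            \<and> (\<forall>i. W (f i) \<inter> - B \<noteq> {}))"
  proof
    assume "\<exists>f. computable f \<and> (\<forall>i j. i \<noteq> j \<longrightarrow> W (f i) \<inter> W (f j) = {}) \<and> (\<forall>i. W (f i) \<inter> - B \<noteq> {})"
    then obtain f where f: "computable f" "\<forall>i j. i \<noteq> j \<longrightarrow> W (f i) \<inter> W (f j) = {}" "\<forall>i. W (f i) \<inter> - B \<noteq> {}"
      by blast
    from f(1) obtain c where c: "\<forall>n. eval c [n] (f n)" unfolding computable_def by blast
    from B1 obtain i where "Xs (enc c) i \<subseteq> B" by blast
    hence "W (f i) \<subseteq> B" using Xs_comp[OF c f(2)] by simp
    thus False using f(3) by blast
  qed
  ultimately have "strongly_hyperhyperimmune (- B)" unfolding strongly_hyperhyperimmune_def by blast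
  moreover have "ereal (1 - \<epsilon>) \<le> upper_density (- B)" using ud e(2) by (metis diff_left_mono ereal_less_eq(3) order.trans)
  ultimately show ?thesis by blast
qed

theorem mainTheorem20:
  shows "(\<forall>A. strongly_hyperhyperimmune A \<longrightarrow> upper_density A \<noteq> 1)
       \<and> (\<forall>\<epsilon>::real. \<epsilon> > 0 \<longrightarrow>
            (\<exists>A. strongly_hyperhyperimmune A \<and> upper_density A \<ge> ereal (1 - \<epsilon>)))"
  using part1 part2 by blast

end
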